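(* For $\sigma,\alpha,\beta,\nu>0$ define, for $x>0$, $$f(x;\sigma,\alpha,\beta,\nu)=\frac{\nu x^{\nu-1}}{\sigma^{\nu}\,\Gamma\left(\frac{\alpha+\nu}{\beta}\right)}\,\Gamma\left(\frac{\alpha}{\beta},\left(\frac{x}{\sigma}\right)^{\beta}\right).$$ If $\sigma_1,\sigma_2,\alpha_1,\alpha_2,\beta_1,\beta_2,\nu_1,\nu_2>0$ satisfy $f(x;\sigma_1,\alpha_1,\beta_1,\nu_1)=f(x;\sigma_2,\alpha_2,\beta_2,\nu_2)$ for all $x>0$, then $\sigma_1=\sigma_2$, $\alpha_1=\alpha_2$, $\beta_1=\beta_2$ and $\nu_1=\nu_2$.
   Context: $\Gamma(a,y)=\int_y^\infty t^{a-1}e^{-t}\,dt$ denotes the upper incomplete gamma function. $f(\cdot;\sigma,\alpha,\beta,\nu)$ is the density of the scaled flexible interpretable gamma (FIG) distribution. *)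

theory Defs
  imports "HOL-Analysis.Analysis"
begin

definition upper_inc_Gamma :: "real \<Rightarrow> real \<Rightarrow> real" where
  "upper_inc_Gamma a y = (LINT t:{y..}|lborel. t powr (a - 1) * exp (- t))"

definition fig_density :: "real \<Rightarrow> real \<Rightarrow> real \<Rightarrow> real \<Rightarrow> real \<Rightarrow> real" where
  "fig_density x \<sigma> \<alpha> \<beta> \<nu> =
     \<nu> * x powr (\<nu> - 1) / (\<sigma> powr \<nu> * Gamma ((\<alpha> + \<nu>) / \<beta>))
       * upper_inc_Gamma (\<alpha> / \<beta>) ((x / \<sigma>) powr \<beta>)"

end

theory Submission imports Defs begin

definition gi :: "real \<Rightarrow> real \<Rightarrow> real" where "gi a t = t powr (a - 1) * exp (- t)"

lemma gi_nonneg: "gi a t \<ge> 0" by (simp add: gi_def)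

lemma gi_has_integral: "a > 0 \<Longrightarrow> (gi a has_integral Gamma a) {0..}"
proof -
  assume "a > 0"
  have e: "gi a = (\<lambda>t. t powr (a-1) / exp t)" by (auto simp: gi_def exp_minus field_simps fun_eq_iff)
  from Gamma_integral_real[OF \<open>a>0\<close>] show ?thesis
    by (simp add: e)
qed

lemma gi_integrable: assumes "a > 0" "y \<ge> 0" shows "gi a integrable_on {y..}"
proof -
  have "gi a absolutely_integrable_on {0..}"
    using gi_has_integral[OF assms(1)] absolutely_integrable_on_iff_nonneg[of "{0..}" "gi a"] gi_nonneg
    by (auto simp: has_integral_integrable)
  hence "gi a absolutely_integrable_on {y..}"
    by (rule set_integrable_subset) (use assms in auto)
  thus ?thesis using set_lebesgue_integral_eq_integral(1) by blast
qed

lemma gi_meas: "gi a \<in> borel_measurable borel"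
  unfolding gi_def by measurable

lemma upper_eq: assumes "a > 0" "y \<ge> 0"
  shows "upper_inc_Gamma a y = integral {y..} (gi a)"
proof -
  have "gi a absolutely_integrable_on {y..}"
    using gi_integrable[OF assms] absolutely_integrable_on_iff_nonneg[of "{y..}" "gi a"] gi_nonneg
    by auto
  hence "integrable (completion lborel) (\<lambda>x. indicator {y..} x *\<^sub>R gi a x)"
    unfolding set_integrable_def by simp
  hence "set_integrable lborel {y..} (gi a)"
    unfolding set_integrable_def
    by (subst (asm) integrable_completion) (auto simp: gi_def)
  from set_borel_integral_eq_integral(2)[OF this] show ?thesis
    by (simp add: upper_inc_Gamma_def gi_def)
qed

lemma gi_cont: "0 < c \<Longrightarrow> continuous_on {c..d} (gi a)"
  unfolding gi_def by (intro continuous_intros) auto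

lemma U_split: assumes "a > 0" "0 \<le> y" "y \<le> z"
  shows "integral {y..} (gi a) = integral {y..z} (gi a) + integral {z..} (gi a)"
proof -
  have i1: "(gi a has_integral integral {y..z} (gi a)) {y..z}"
    using gi_integrable[OF assms(1,2)] by (intro integrable_integral integrable_on_subinterval[of _ "{y..}"]) auto
  have i2: "(gi a has_integral integral {z..} (gi a)) {z..}"
    using gi_integrable[OF assms(1)] assms by (intro integrable_integral) auto
  have "negligible ({y..z} \<inter> {z..})"
    using assms by (simp add: Int_commute)
  moreover have "{y..z} \<union> {z..} = {y..}" using assms by auto
  ultimately have "(gi a has_integral (integral {y..z} (gi a) + integral {z..} (gi a))) {y..}"
    using has_integral_Un[OF i1 i2] by metis
  thus ?thesis by (rule integral_unique)
qed

lemma U_mono: assumes "a > 0" "0 \<le> y" "y \<le> z"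
  shows "integral {z..} (gi a) \<le> integral {y..} (gi a)"
proof -
  have "integral {y..z} (gi a) \<ge> 0" by (intro integral_nonneg) (auto simp: gi_nonneg intro: integrable_on_subinterval[OF gi_integrable[OF assms(1,2)]])
  thus ?thesis using U_split[OF assms] by simp
qed

lemma U_nonneg: assumes "a > 0" "0 \<le> y" shows "integral {y..} (gi a) \<ge> 0"
  by (intro integral_nonneg gi_integrable assms) (auto simp: gi_nonneg)

lemma U_pos: assumes "a > 0" shows "integral {1..} (gi a) > 0"
proof -
  define c where "c = min 1 (2 powr (a - 1)) * exp (-2)"
  have cpos: "c > 0" by (simp add: c_def)
  have "integral {1..2::real} (\<lambda>_. c) \<le> integral {1..2} (gi a)"
  proof (rule integral_le)
    show "gi a integrable_on {1..2}" by (intro integrable_continuous_interval gi_cont) auto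
    fix t :: real assume t: "t \<in> {1..2}"
    have "min 1 (2 powr (a - 1)) \<le> t powr (a - 1)"
    proof (cases "a \<ge> 1")
      case True
      hence "1 \<le> t powr (a - 1)" using t by (intro ge_one_powr_ge_zero) auto
      thus ?thesis by linarith
    next
      case False
      hence "2 powr (a - 1) \<le> t powr (a - 1)" using t by (intro powr_mono2') auto
      thus ?thesis by linarith
    qed
    moreover have "exp (-2) \<le> exp (-t)" using t by auto
    ultimately show "c \<le> gi a t" unfolding c_def gi_def
      by (intro mult_mono) auto
  qed auto
  hence "c \<le> integral {1..2} (gi a)" by simp
  moreover have "integral {2..} (gi a) \<ge> 0" by (rule U_nonneg[OF assms]) auto
  ultimately show ?thesis using U_split[OF assms, of 1 2] cpos by simp
qed

lemma U_deriv: assumes "a > 0" "y > 0"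
  shows "((\<lambda>y. integral {y..} (gi a)) has_real_derivative - gi a y) (at y)"
proof -
  define c where "c = y / 2"
  have c: "0 < c" "c < y" using assms by (auto simp: c_def)
  have "((\<lambda>u. integral {c..} (gi a) - integral {c..u} (gi a)) has_real_derivative 0 - gi a y) (at y within {c..2*y})"
    by (intro derivative_intros integral_has_real_derivative gi_cont) (use c in auto)
  hence "((\<lambda>u. integral {c..} (gi a) - integral {c..u} (gi a)) has_real_derivative - gi a y) (at y)"
    using c by (simp add: at_within_Icc_at)
  thus ?thesis
  proof (rule has_field_derivative_transform_within_open[where S="{c<..}"])
    fix u assume "u \<in> {c<..}"
    thus "integral {c..} (gi a) - integral {c..u} (gi a) = integral {u..} (gi a)"
      using U_split[OF assms(1), of c u] c by simp
  qed (use c in auto)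
qed

lemma UG_mono: assumes "a > 0" "0 \<le> y" "y \<le> z" shows "upper_inc_Gamma a z \<le> upper_inc_Gamma a y"
  using U_mono[OF assms] upper_eq assms by simp

lemma UG_pos: assumes "a > 0" "0 \<le> y" "y \<le> 1" shows "upper_inc_Gamma a 1 \<le> upper_inc_Gamma a y" "upper_inc_Gamma a 1 > 0"
  using UG_mono[OF assms] U_pos[OF assms(1)] upper_eq[OF assms(1)] by auto

lemma UG_deriv: assumes "a > 0" "y > 0"
  shows "((\<lambda>y. upper_inc_Gamma a y) has_real_derivative - gi a y) (at y)"
  using U_deriv[OF assms]
  by (rule has_field_derivative_transform_within_open[where S="{0<..}"]) (use assms upper_eq in auto)

lemma deriv_eq: assumes "\<forall>x>0. F x = G x" "(x::real) > 0"
  "(F has_real_derivative F') (at x)" "(G has_real_derivative G') (at x)" shows "F' = G'"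
proof -
  from assms(4) have "(F has_real_derivative G') (at x)"
    by (rule has_field_derivative_transform_within_open[where S="{0<..}"]) (use assms in auto)
  thus ?thesis using DERIV_unique assms(3) by blast
qed

lemma h_deriv: assumes "\<alpha> > 0" "\<beta> > 0" "\<sigma> > 0" "x > 0"
  shows "((\<lambda>x. upper_inc_Gamma (\<alpha>/\<beta>) ((x/\<sigma>) powr \<beta>)) has_real_derivative
     - (\<beta> / \<sigma> * (x/\<sigma>) powr (\<alpha> - 1) * exp (- ((x/\<sigma>) powr \<beta>)))) (at x)"
proof -
  have u: "x / \<sigma> > 0" using assms by simp
  have d1: "((\<lambda>x. (x/\<sigma>) powr \<beta>) has_real_derivative (\<beta> * (x/\<sigma>) powr (\<beta> - 1) * (1/\<sigma>))) (at x)"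
  proof (rule DERIV_chain2[where f="\<lambda>z. z powr \<beta>" and g="\<lambda>x. x/\<sigma>"])
    show "((\<lambda>z. z powr \<beta>) has_real_derivative \<beta> * (x / \<sigma>) powr (\<beta> - 1)) (at (x / \<sigma>))"
      by (rule has_real_derivative_powr[OF u])
    show "((\<lambda>x. x / \<sigma>) has_real_derivative 1 / \<sigma>) (at x)"
      using assms by (auto intro!: derivative_eq_intros)
  qed
  have "((\<lambda>x. upper_inc_Gamma (\<alpha>/\<beta>) ((x/\<sigma>) powr \<beta>)) has_real_derivative
     (- gi (\<alpha>/\<beta>) ((x/\<sigma>) powr \<beta>)) * (\<beta> * (x/\<sigma>) powr (\<beta> - 1) * (1/\<sigma>))) (at x)"
    by (rule DERIV_chain2[OF UG_deriv d1]) (use assms in auto)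
  moreover have "(- gi (\<alpha>/\<beta>) ((x/\<sigma>) powr \<beta>)) * (\<beta> * (x/\<sigma>) powr (\<beta> - 1) * (1/\<sigma>))
     = - (\<beta> / \<sigma> * (x/\<sigma>) powr (\<alpha> - 1) * exp (- ((x/\<sigma>) powr \<beta>)))"
  proof -
    have "((x/\<sigma>) powr \<beta>) powr (\<alpha>/\<beta> - 1) = (x/\<sigma>) powr (\<alpha> - \<beta>)"
      using assms by (simp add: powr_powr algebra_simps)
    moreover have "(x/\<sigma>) powr (\<alpha> - \<beta>) * (x/\<sigma>) powr (\<beta> - 1) = (x/\<sigma>) powr (\<alpha> - 1)"
      by (simp add: powr_add[symmetric])
    ultimately show ?thesis unfolding gi_def by (simp add: field_simps)
  qed
  ultimately show ?thesis by metis
qed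

lemma pw_deriv: assumes "\<sigma> > 0" "x > 0"
  shows "((\<lambda>x. (x/\<sigma>) powr \<beta>) has_real_derivative (\<beta> * (x/\<sigma>) powr (\<beta> - 1) * (1/\<sigma>))) (at x)"
proof (rule DERIV_chain2[where f="\<lambda>z. z powr \<beta>" and g="\<lambda>x. x/\<sigma>"])
  show "((\<lambda>z. z powr \<beta>) has_real_derivative \<beta> * (x / \<sigma>) powr (\<beta> - 1)) (at (x / \<sigma>))"
    by (rule has_real_derivative_powr) (use assms in simp)
  show "((\<lambda>x. x / \<sigma>) has_real_derivative 1 / \<sigma>) (at x)"
    using assms by (auto intro!: derivative_eq_intros)
qed

lemma powr_m1: assumes "(s::real) > 0" shows "s powr (b - 1) * s = s powr b"
proof -
  have "s powr b = s powr ((b - 1) + 1)" by simp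
  also have "\<dots> = s powr (b - 1) * s powr 1" by (rule powr_add)
  also have "\<dots> = s powr (b - 1) * s" using assms by simp
  finally show ?thesis by simp
qed

lemma nu_le:
  fixes C1 C2 \<nu>1 \<nu>2 x0 m2 M1 :: real and h1 h2 :: "real \<Rightarrow> real"
  assumes "C1 > 0" "C2 > 0" "x0 > 0" "m2 > 0" "M1 > 0"
    and eq: "\<forall>x>0. C1 * x powr (\<nu>1 - 1) * h1 x = C2 * x powr (\<nu>2 - 1) * h2 x"
    and bd: "\<forall>x. 0 < x \<and> x \<le> x0 \<longrightarrow> 0 \<le> h1 x \<and> h1 x \<le> M1 \<and> m2 \<le> h2 x"
  shows "\<nu>1 \<le> \<nu>2"
proof (rule ccontr)
  assume "\<not> \<nu>1 \<le> \<nu>2"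
  define d where "d = \<nu>1 - \<nu>2"
  have d: "d > 0" using \<open>\<not> \<nu>1 \<le> \<nu>2\<close> by (simp add: d_def)
  define m where "m = C2 * m2 / (C1 * M1)"
  have m: "m > 0" using assms by (simp add: m_def)
  define x where "x = min x0 ((m/2) powr (1/d))"
  have x: "x > 0" "x \<le> x0" using assms m by (auto simp: x_def)
  have "x powr d \<le> ((m/2) powr (1/d)) powr d"
    using x d by (intro powr_mono2) (auto simp: x_def)
  also have "\<dots> = m / 2" using d m by (simp add: powr_powr)
  finally have xd: "x powr d \<le> m / 2" .
  have pw: "x powr (\<nu>1 - 1) = x powr d * x powr (\<nu>2 - 1)"
    by (simp add: d_def powr_add[symmetric])
  have e0: "C1 * x powr (\<nu>1 - 1) * h1 x = C2 * x powr (\<nu>2 - 1) * h2 x" using eq x by auto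
  have "(C1 * x powr d * h1 x) * x powr (\<nu>2 - 1) = C1 * x powr (\<nu>1 - 1) * h1 x"
    unfolding pw by (simp add: algebra_simps)
  also have "\<dots> = (C2 * h2 x) * x powr (\<nu>2 - 1)" using e0 by (simp add: algebra_simps)
  finally have "(C1 * x powr d * h1 x) * x powr (\<nu>2 - 1) = (C2 * h2 x) * x powr (\<nu>2 - 1)" .
  hence e: "C1 * x powr d * h1 x = C2 * h2 x" using x by simp
  have b: "0 \<le> h1 x" "h1 x \<le> M1" "m2 \<le> h2 x" using bd x by auto
  have "C1 * x powr d * h1 x \<le> C1 * (m/2) * M1"
    using b xd assms m by (intro mult_mono) auto
  also have "\<dots> = C2 * m2 / 2" using assms by (simp add: m_def field_simps)
  finally have "C2 * h2 x \<le> C2 * m2 / 2" using e by simp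
  moreover have "C2 * m2 \<le> C2 * h2 x" using b assms by simp
  ultimately show False using assms by simp
qed

lemma h_bounds: assumes "\<alpha> > 0" "\<beta> > 0" "\<sigma> > 0" "0 < x" "x \<le> \<sigma>"
  shows "0 \<le> upper_inc_Gamma (\<alpha>/\<beta>) ((x/\<sigma>) powr \<beta>)"
    "upper_inc_Gamma (\<alpha>/\<beta>) ((x/\<sigma>) powr \<beta>) \<le> upper_inc_Gamma (\<alpha>/\<beta>) 0"
    "upper_inc_Gamma (\<alpha>/\<beta>) 1 \<le> upper_inc_Gamma (\<alpha>/\<beta>) ((x/\<sigma>) powr \<beta>)"
    "upper_inc_Gamma (\<alpha>/\<beta>) 1 > 0"
proof -
  have a: "\<alpha>/\<beta> > 0" using assms by simp
  have y: "(x/\<sigma>) powr \<beta> \<le> 1" using assms by (intro powr_le1) auto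
  have y0: "0 \<le> (x/\<sigma>) powr \<beta>" by simp
  show "upper_inc_Gamma (\<alpha>/\<beta>) 1 \<le> upper_inc_Gamma (\<alpha>/\<beta>) ((x/\<sigma>) powr \<beta>)"
    "upper_inc_Gamma (\<alpha>/\<beta>) 1 > 0" using UG_pos[OF a y0 y] by auto
  thus "0 \<le> upper_inc_Gamma (\<alpha>/\<beta>) ((x/\<sigma>) powr \<beta>)" by linarith
  show "upper_inc_Gamma (\<alpha>/\<beta>) ((x/\<sigma>) powr \<beta>) \<le> upper_inc_Gamma (\<alpha>/\<beta>) 0"
    using UG_mono[OF a _ y0] by simp
qed

theorem mainTheorem6:
  fixes \<sigma>1 \<sigma>2 \<alpha>1 \<alpha>2 \<beta>1 \<beta>2 \<nu>1 \<nu>2 :: real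
  assumes "\<sigma>1 > 0" "\<sigma>2 > 0" "\<alpha>1 > 0" "\<alpha>2 > 0"
    and "\<beta>1 > 0" "\<beta>2 > 0" "\<nu>1 > 0" "\<nu>2 > 0"
    and "\<forall>x>0. fig_density x \<sigma>1 \<alpha>1 \<beta>1 \<nu>1 = fig_density x \<sigma>2 \<alpha>2 \<beta>2 \<nu>2"
  shows "\<sigma>1 = \<sigma>2 \<and> \<alpha>1 = \<alpha>2 \<and> \<beta>1 = \<beta>2 \<and> \<nu>1 = \<nu>2"
proof -
  note p = assms(1-8)
  define h1 where "h1 = (\<lambda>x. upper_inc_Gamma (\<alpha>1/\<beta>1) ((x/\<sigma>1) powr \<beta>1))"
  define h2 where "h2 = (\<lambda>x. upper_inc_Gamma (\<alpha>2/\<beta>2) ((x/\<sigma>2) powr \<beta>2))"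
  define C1 where "C1 = \<nu>1 / (\<sigma>1 powr \<nu>1 * Gamma ((\<alpha>1 + \<nu>1) / \<beta>1))"
  define C2 where "C2 = \<nu>2 / (\<sigma>2 powr \<nu>2 * Gamma ((\<alpha>2 + \<nu>2) / \<beta>2))"
  have C1: "C1 > 0" using p unfolding C1_def by (intro divide_pos_pos mult_pos_pos Gamma_real_pos) auto
  have C2: "C2 > 0" using p unfolding C2_def by (intro divide_pos_pos mult_pos_pos Gamma_real_pos) auto
  have eq: "\<forall>x>0. C1 * x powr (\<nu>1 - 1) * h1 x = C2 * x powr (\<nu>2 - 1) * h2 x"
    using assms(9) by (simp add: fig_density_def C1_def C2_def h1_def h2_def)
  define x0 where "x0 = min \<sigma>1 \<sigma>2"
  have x0: "x0 > 0" using p by (simp add: x0_def)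
  have bd1: "\<forall>x. 0 < x \<and> x \<le> x0 \<longrightarrow> 0 \<le> h1 x \<and> h1 x \<le> upper_inc_Gamma (\<alpha>1/\<beta>1) 0
      \<and> upper_inc_Gamma (\<alpha>1/\<beta>1) 1 \<le> h1 x"
    using h_bounds[of \<alpha>1 \<beta>1 \<sigma>1] p by (auto simp: h1_def x0_def)
  have bd2: "\<forall>x. 0 < x \<and> x \<le> x0 \<longrightarrow> 0 \<le> h2 x \<and> h2 x \<le> upper_inc_Gamma (\<alpha>2/\<beta>2) 0
      \<and> upper_inc_Gamma (\<alpha>2/\<beta>2) 1 \<le> h2 x"
    using h_bounds[of \<alpha>2 \<beta>2 \<sigma>2] p by (auto simp: h2_def x0_def)
  have m1: "upper_inc_Gamma (\<alpha>1/\<beta>1) 1 > 0" "upper_inc_Gamma (\<alpha>1/\<beta>1) 0 > 0"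
    using h_bounds[of \<alpha>1 \<beta>1 \<sigma>1 \<sigma>1] p by auto
  have m2: "upper_inc_Gamma (\<alpha>2/\<beta>2) 1 > 0" "upper_inc_Gamma (\<alpha>2/\<beta>2) 0 > 0"
    using h_bounds[of \<alpha>2 \<beta>2 \<sigma>2 \<sigma>2] p by auto
  have "\<nu>1 \<le> \<nu>2"
    by (rule nu_le[OF C1 C2 x0 m2(1) m1(2) eq]) (use bd1 bd2 in blast)
  moreover have "\<nu>2 \<le> \<nu>1"
  proof -
    have eq': "\<forall>x>0. C2 * x powr (\<nu>2 - 1) * h2 x = C1 * x powr (\<nu>1 - 1) * h1 x" using eq by auto
    show ?thesis by (rule nu_le[OF C2 C1 x0 m1(1) m2(2) eq']) (use bd1 bd2 in blast)
  qed
  ultimately have nu: "\<nu>1 = \<nu>2" by simp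
  have eqh: "\<forall>x>0. C1 * h1 x = C2 * h2 x"
  proof (intro allI impI)
    fix x :: real assume "x > 0"
    hence "(C1 * h1 x) * x powr (\<nu>1 - 1) = (C2 * h2 x) * x powr (\<nu>1 - 1)"
      using eq nu by (simp add: algebra_simps)
    thus "C1 * h1 x = C2 * h2 x" using \<open>x > 0\<close> by simp
  qed
  define D1 where "D1 = (\<lambda>x. \<beta>1 / \<sigma>1 * (x/\<sigma>1) powr (\<alpha>1 - 1) * exp (- ((x/\<sigma>1) powr \<beta>1)))"
  define D2 where "D2 = (\<lambda>x. \<beta>2 / \<sigma>2 * (x/\<sigma>2) powr (\<alpha>2 - 1) * exp (- ((x/\<sigma>2) powr \<beta>2)))"
  have eqD: "\<forall>x>0. C1 * D1 x = C2 * D2 x"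
  proof (intro allI impI)
    fix x :: real assume x: "x > 0"
    have "C1 * - D1 x = C2 * - D2 x"
    proof (rule deriv_eq[OF eqh x])
      show "((\<lambda>x. C1 * h1 x) has_real_derivative C1 * - D1 x) (at x)"
        unfolding h1_def D1_def by (intro DERIV_cmult h_deriv) (use p x in auto)
      show "((\<lambda>x. C2 * h2 x) has_real_derivative C2 * - D2 x) (at x)"
        unfolding h2_def D2_def by (intro DERIV_cmult h_deriv) (use p x in auto)
    qed
    thus "C1 * D1 x = C2 * D2 x" by simp
  qed
  define L1 where "L1 = (\<lambda>x. ln (C1 * \<beta>1 / \<sigma>1) + (\<alpha>1 - 1) * ln (x/\<sigma>1) - (x/\<sigma>1) powr \<beta>1)"
  define L2 where "L2 = (\<lambda>x. ln (C2 * \<beta>2 / \<sigma>2) + (\<alpha>2 - 1) * ln (x/\<sigma>2) - (x/\<sigma>2) powr \<beta>2)"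
  have lnD1: "ln (C1 * D1 x) = L1 x" if "x > 0" for x
    using that p C1 by (simp add: D1_def L1_def ln_mult ln_powr ln_div)
  have lnD2: "ln (C2 * D2 x) = L2 x" if "x > 0" for x
    using that p C2 by (simp add: D2_def L2_def ln_mult ln_powr ln_div)
  have eqL: "\<forall>x>0. L1 x = L2 x" using eqD lnD1 lnD2 by metis
  define E1 where "E1 = (\<lambda>x. (\<alpha>1 - 1) - \<beta>1 * (x/\<sigma>1) powr \<beta>1)"
  define E2 where "E2 = (\<lambda>x. (\<alpha>2 - 1) - \<beta>2 * (x/\<sigma>2) powr \<beta>2)"
  have Lder: "((\<lambda>x. ln (C * \<beta> / \<sigma>) + (\<alpha> - 1) * ln (x/\<sigma>) - (x/\<sigma>) powr \<beta>) has_real_derivative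
       ((\<alpha> - 1) - \<beta> * (x/\<sigma>) powr \<beta>) / x) (at x)" if "x > 0" "\<sigma> > 0" for x C \<alpha> \<beta> \<sigma> :: real
  proof -
    have dln: "((\<lambda>z. ln (z/\<sigma>)) has_real_derivative (1 / (x/\<sigma>) * (1/\<sigma>))) (at x)"
    proof (rule DERIV_chain2[where f=ln and g="\<lambda>x. x/\<sigma>"])
      show "(ln has_real_derivative 1 / (x / \<sigma>)) (at (x / \<sigma>))" using that by (intro DERIV_ln_divide) auto
      show "((\<lambda>x. x / \<sigma>) has_real_derivative 1 / \<sigma>) (at x)"
        using that by (auto intro!: derivative_eq_intros)
    qed
    have "((\<lambda>x. ln (C * \<beta> / \<sigma>) + (\<alpha> - 1) * ln (x/\<sigma>) - (x/\<sigma>) powr \<beta>) has_real_derivative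
       0 + (\<alpha> - 1) * (1 / (x/\<sigma>) * (1/\<sigma>)) - (\<beta> * (x/\<sigma>) powr (\<beta> - 1) * (1/\<sigma>))) (at x)"
      using that by (intro derivative_intros pw_deriv DERIV_cmult dln) auto
    moreover have "(x/\<sigma>) powr (\<beta> - 1) * (x / \<sigma>) = (x/\<sigma>) powr \<beta>"
    proof -
      have "(x/\<sigma>) powr \<beta> = (x/\<sigma>) powr ((\<beta> - 1) + 1)" by simp
      also have "\<dots> = (x/\<sigma>) powr (\<beta> - 1) * (x/\<sigma>) powr 1" by (rule powr_add)
      also have "\<dots> = (x/\<sigma>) powr (\<beta> - 1) * (x / \<sigma>)" using that by simp
      finally show ?thesis by simp
    qed
    hence "0 + (\<alpha> - 1) * (1 / (x/\<sigma>) * (1/\<sigma>)) - (\<beta> * (x/\<sigma>) powr (\<beta> - 1) * (1/\<sigma>))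
        = ((\<alpha> - 1) - \<beta> * (x/\<sigma>) powr \<beta>) / x"
      using that by (simp add: field_simps)
    ultimately show ?thesis by metis
  qed
  have eqE: "\<forall>x>0. E1 x = E2 x"
  proof (intro allI impI)
    fix x :: real assume x: "x > 0"
    have "E1 x / x = E2 x / x"
      by (rule deriv_eq[OF eqL x]) (unfold L1_def L2_def E1_def E2_def, (rule Lder; use x p in auto)+)
    thus "E1 x = E2 x" using x by simp
  qed
  have eqF: "\<beta>1 * (\<beta>1 * (x/\<sigma>1) powr (\<beta>1 - 1) * (1/\<sigma>1)) = \<beta>2 * (\<beta>2 * (x/\<sigma>2) powr (\<beta>2 - 1) * (1/\<sigma>2))"
    if x: "x > 0" for x
  proof -
    have "- \<beta>1 * (\<beta>1 * (x/\<sigma>1) powr (\<beta>1 - 1) * (1/\<sigma>1)) = - \<beta>2 * (\<beta>2 * (x/\<sigma>2) powr (\<beta>2 - 1) * (1/\<sigma>2))"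
    proof (rule deriv_eq[OF eqE x])
      have "(E1 has_real_derivative 0 - \<beta>1 * (\<beta>1 * (x/\<sigma>1) powr (\<beta>1 - 1) * (1/\<sigma>1))) (at x)"
        unfolding E1_def by (intro derivative_intros DERIV_cmult pw_deriv) (use x p in auto)
      thus "(E1 has_real_derivative - \<beta>1 * (\<beta>1 * (x/\<sigma>1) powr (\<beta>1 - 1) * (1/\<sigma>1))) (at x)" by simp
      have "(E2 has_real_derivative 0 - \<beta>2 * (\<beta>2 * (x/\<sigma>2) powr (\<beta>2 - 1) * (1/\<sigma>2))) (at x)"
        unfolding E2_def by (intro derivative_intros DERIV_cmult pw_deriv) (use x p in auto)
      thus "(E2 has_real_derivative - \<beta>2 * (\<beta>2 * (x/\<sigma>2) powr (\<beta>2 - 1) * (1/\<sigma>2))) (at x)" by simp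
    qed
    thus ?thesis by simp
  qed
  define Q1 where "Q1 = \<beta>1 * \<beta>1 / (\<sigma>1 powr (\<beta>1 - 1) * \<sigma>1)"
  define Q2 where "Q2 = \<beta>2 * \<beta>2 / (\<sigma>2 powr (\<beta>2 - 1) * \<sigma>2)"
  have Q: "Q1 > 0" "Q2 > 0" using p by (auto simp: Q1_def Q2_def)
  have eqQ: "Q1 * x powr (\<beta>1 - 1) = Q2 * x powr (\<beta>2 - 1)" if "x > 0" for x
    using eqF[OF that] that p by (simp add: Q1_def Q2_def powr_divide field_simps)
  have Q12: "Q1 = Q2" using eqQ[of 1] by simp
  have "2 powr (\<beta>1 - 1) = 2 powr (\<beta>2 - 1)" using eqQ[of 2] Q Q12 by simp
  hence beta: "\<beta>1 = \<beta>2" by (simp add: powr_inj)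
  have "\<sigma>1 powr \<beta>1 = \<sigma>2 powr \<beta>1"
  proof -
    have "\<sigma>1 powr (\<beta>1 - 1) * \<sigma>1 = \<sigma>1 powr \<beta>1" "\<sigma>2 powr (\<beta>1 - 1) * \<sigma>2 = \<sigma>2 powr \<beta>1"
      using p by (simp_all add: powr_m1)
    thus ?thesis using Q12 p beta unfolding Q1_def Q2_def by (simp add: field_simps)
  qed
  hence sigma: "\<sigma>1 = \<sigma>2"
  proof -
    assume h: "\<sigma>1 powr \<beta>1 = \<sigma>2 powr \<beta>1"
    have "(\<sigma>1 powr \<beta>1) powr (1/\<beta>1) = (\<sigma>2 powr \<beta>1) powr (1/\<beta>1)" using h by simp
    thus ?thesis using p by (simp add: powr_powr)
  qed
  have "E1 \<sigma>1 = E2 \<sigma>1" using eqE p by auto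
  hence "\<alpha>1 = \<alpha>2" using p sigma beta by (simp add: E1_def E2_def)
  thus ?thesis using sigma beta nu by simp
qed

end
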